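(* Let $k \geq 2$ and let $G_1, \dots, G_k$ be finite simple Class 1 graphs. Then for each $i$ there is a finite simple graph $G_i^*$ obtained from $G_i$ by adding extra vertices and edges, such that $G_i^*$ is $\Delta(G_i)$-regular and Class 1, and such that whenever two edges of $G_1 \square \cdots \square G_k$ are at distance at least $3$ in $G_1 \square \cdots \square G_k$, they are also at distance at least $3$ in $G_1^* \square \cdots \square G_k^*$.
   Context: A graph $G$ is Class 1 if its chromatic index $\chi'(G)$ equals its maximum degree $\Delta(G)$. The Cartesian product $G \square H$ has vertex set $V(G)\times V(H)$, with $(u_1,u_2)$ adjacent to $(v_1,v_2)$ iff either $u_1=v_1$ and $u_2v_2 \in E(H)$, or $u_2=v_2$ and $u_1v_1\in E(G)$; iterated products are defined accordingly. The distance between vertices is the length of a shortest path between them (infinite if none), and the distance between edges $xy$ and $zw$ is $\min\{d(x,z),d(x,w),d(y,z),d(y,w)\}$. *)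

theory Defs
  imports Main "HOL-Library.Extended_Nat"
begin

type_synonym 'a graph = "'a set \<times> 'a set set"

definition verts :: "'a graph \<Rightarrow> 'a set" where "verts G = fst G"
definition edges :: "'a graph \<Rightarrow> 'a set set" where "edges G = snd G"

definition simple_graph :: "'a graph \<Rightarrow> bool" where
  "simple_graph G \<longleftrightarrow> finite (verts G) \<and>
     (\<forall>e\<in>edges G. \<exists>u v. u \<noteq> v \<and> u \<in> verts G \<and> v \<in> verts G \<and> e = {u, v})"

definition degree :: "'a graph \<Rightarrow> 'a \<Rightarrow> nat" where
  "degree G v = card {e \<in> edges G. v \<in> e}"

text \<open>Maximum degree; 0 for the graph with no vertices.\<close>
definition max_degree :: "'a graph \<Rightarrow> nat" where
  "max_degree G = Sup (degree G ` verts G)"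

definition regular :: "'a graph \<Rightarrow> nat \<Rightarrow> bool" where
  "regular G d \<longleftrightarrow> (\<forall>v\<in>verts G. degree G v = d)"

definition proper_edge_colouring :: "'a graph \<Rightarrow> nat \<Rightarrow> ('a set \<Rightarrow> nat) \<Rightarrow> bool" where
  "proper_edge_colouring G n c \<longleftrightarrow> (\<forall>e\<in>edges G. c e < n) \<and>
     (\<forall>e\<in>edges G. \<forall>f\<in>edges G. e \<noteq> f \<and> e \<inter> f \<noteq> {} \<longrightarrow> c e \<noteq> c f)"

definition chromatic_index :: "'a graph \<Rightarrow> nat" where
  "chromatic_index G = (LEAST n. \<exists>c. proper_edge_colouring G n c)"

definition class1 :: "'a graph \<Rightarrow> bool" where
  "class1 G \<longleftrightarrow> chromatic_index G = max_degree G"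

definition subgraph :: "'a graph \<Rightarrow> 'a graph \<Rightarrow> bool" where
  "subgraph H G \<longleftrightarrow> verts H \<subseteq> verts G \<and> edges H \<subseteq> edges G"

definition cart_prod :: "nat \<Rightarrow> (nat \<Rightarrow> 'a graph) \<Rightarrow> 'a list graph" where
  "cart_prod k G =
    ({xs. length xs = k \<and> (\<forall>i<k. xs ! i \<in> verts (G i))},
     {{xs, ys} | xs ys. length xs = k \<and> length ys = k \<and>
        (\<forall>i<k. xs ! i \<in> verts (G i)) \<and> (\<forall>i<k. ys ! i \<in> verts (G i)) \<and>
        (\<exists>i<k. {xs ! i, ys ! i} \<in> edges (G i) \<and> (\<forall>j<k. j \<noteq> i \<longrightarrow> xs ! j = ys ! j))})"

definition walk_of_length :: "'a graph \<Rightarrow> 'a \<Rightarrow> 'a \<Rightarrow> nat \<Rightarrow> bool" where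
  "walk_of_length G x y n \<longleftrightarrow>
     (\<exists>p :: nat \<Rightarrow> 'a. p 0 = x \<and> p n = y \<and> (\<forall>i<n. {p i, p (Suc i)} \<in> edges G))"

text \<open>Distance (infinite if no path).\<close>
definition dist :: "'a graph \<Rightarrow> 'a \<Rightarrow> 'a \<Rightarrow> enat" where
  "dist G x y = Inf {enat n | n. walk_of_length G x y n}"

definition edge_dist :: "'a graph \<Rightarrow> 'a set \<Rightarrow> 'a set \<Rightarrow> enat" where
  "edge_dist G e f = Inf {dist G x z | x z. x \<in> e \<and> z \<in> f}"

end

theory Submission
  imports Defs
begin


lemma walk_extend:
  assumes "walk_of_length B a b m" "{b,c} \<in> edges B"
  shows "walk_of_length B a c (Suc m)"
proof -
  obtain p where p: "p 0 = a" "p m = b" "\<forall>i<m. {p i, p (Suc i)} \<in> edges B"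
    using assms(1) unfolding walk_of_length_def by blast
  define q where "q = (\<lambda>i. if i \<le> m then p i else c)"
  have "q 0 = a" "q (Suc m) = c" using p by (auto simp: q_def)
  moreover have "\<forall>i<Suc m. {q i, q (Suc i)} \<in> edges B"
  proof (intro allI impI)
    fix i assume "i < Suc m"
    then consider "i < m" | "i = m" by linarith
    then show "{q i, q (Suc i)} \<in> edges B"
      by cases (use p assms(2) in \<open>auto simp: q_def\<close>)
  qed
  ultimately show ?thesis unfolding walk_of_length_def by blast
qed

lemma walk_proj:
  assumes h: "\<And>p q. {p,q} \<in> edges A \<Longrightarrow> h p = h q \<or> {h p, h q} \<in> edges B"
  shows "walk_of_length A x y n \<Longrightarrow> \<exists>m\<le>n. walk_of_length B (h x) (h y) m"
proof (induction n arbitrary: y)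
  case 0
  then have "x = y" unfolding walk_of_length_def by auto
  moreover have "walk_of_length B (h x) (h x) 0" unfolding walk_of_length_def
    by (rule exI[of _ "\<lambda>_. h x"]) simp
  ultimately show ?case by auto
next
  case (Suc n)
  obtain p where p: "p 0 = x" "p (Suc n) = y" "\<forall>i<Suc n. {p i, p (Suc i)} \<in> edges A"
    using Suc.prems unfolding walk_of_length_def by blast
  have "walk_of_length A x (p n) n" unfolding walk_of_length_def using p by auto
  then obtain m where m: "m \<le> n" "walk_of_length B (h x) (h (p n)) m" using Suc.IH by blast
  have "{p n, y} \<in> edges A" using p by auto
  then have "h (p n) = h y \<or> {h (p n), h y} \<in> edges B" by (rule h)
  then show ?case
  proof
    assume "h (p n) = h y" then show ?thesis using m by (metis le_SucI)
  next
    assume "{h (p n), h y} \<in> edges B"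
    then have "walk_of_length B (h x) (h y) (Suc m)" using m(2) walk_extend by metis
    then show ?thesis using m(1) by auto
  qed
qed

lemma dist_proj:
  assumes h: "\<And>p q. {p,q} \<in> edges A \<Longrightarrow> h p = h q \<or> {h p, h q} \<in> edges B"
  shows "dist B (h x) (h y) \<le> dist A x y"
  unfolding dist_def
proof (rule Inf_mono)
  fix b assume "b \<in> {enat n |n. walk_of_length A x y n}"
  then obtain n where n: "b = enat n" "walk_of_length A x y n" by auto
  then obtain m where "m \<le> n" "walk_of_length B (h x) (h y) m" using walk_proj[of A h B, OF h] by blast
  then show "\<exists>a\<in>{enat n |n. walk_of_length B (h x) (h y) n}. a \<le> b" using n by auto
qed

lemma edge_dist_proj:
  assumes h: "\<And>p q. {p,q} \<in> edges A \<Longrightarrow> h p = h q \<or> {h p, h q} \<in> edges B"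
    and "\<forall>x\<in>e. h x = x" "\<forall>z\<in>f. h z = z"
  shows "edge_dist B e f \<le> edge_dist A e f"
  unfolding edge_dist_def
proof (rule Inf_mono)
  fix b assume "b \<in> {dist A x z |x z. x \<in> e \<and> z \<in> f}"
  then obtain x z where xz: "b = dist A x z" "x \<in> e" "z \<in> f" by auto
  have "dist B (h x) (h z) \<le> dist A x z" by (rule dist_proj[of A h B, OF h])
  then have "dist B x z \<le> b" using xz assms(2,3) by auto
  then show "\<exists>a\<in>{dist B x z |x z. x \<in> e \<and> z \<in> f}. a \<le> b" using xz by blast
qed


unbundle bit_operations_syntax

lemma x1: "(s::nat) < 2^D \<Longrightarrow> a < D \<Longrightarrow> s XOR 2^a < 2^D"
  by (metis take_bit_xor take_bit_nat_eq_self_iff power_strict_increasing_iff one_less_numeral_iff semiring_norm(76))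
lemma x2: "((s::nat) XOR 2^a) XOR 2^a = s"
  by (simp add: xor.assoc)
lemma x3: "(s::nat) XOR (s XOR 2^a) = 2^a"
  by (simp add: xor.assoc[symmetric])
lemma x3': "((s::nat) XOR 2^a) XOR s = 2^a"
  by (metis x3 xor.commute)
lemma x4: "(s::nat) XOR 2^a \<noteq> s"
  by (metis x3 xor_self_eq power_not_zero zero_neq_numeral)

definition ext :: "nat \<Rightarrow> nat \<Rightarrow> (nat set \<Rightarrow> nat) \<Rightarrow> nat graph \<Rightarrow> nat graph" where
 "ext N D c G = ({v + N*s | v s. v \<in> verts G \<and> s < 2^D},
   {(\<lambda>x. x + N*s) ` g | g s. g \<in> edges G \<and> s < 2^D} \<union>
   {{v + N*s, v + N*(s XOR 2^a)} | v s a. v \<in> verts G \<and> s < 2^D \<and> a < D \<and>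
        (\<forall>g\<in>edges G. v \<in> g \<longrightarrow> c g \<noteq> a)})"

definition ecol :: "nat \<Rightarrow> (nat set \<Rightarrow> nat) \<Rightarrow> nat graph \<Rightarrow> nat set \<Rightarrow> nat" where
 "ecol N c G e = (if (\<lambda>x. x mod N) ` e \<in> edges G then c ((\<lambda>x. x mod N) ` e)
     else (THE a. \<exists>x\<in>e. \<exists>y\<in>e. (x div N) XOR (y div N) = 2^a))"

lemma verts_ext: "verts (ext N D c G) = {v + N*s | v s. v \<in> verts G \<and> s < 2^D}"
  by (simp add: ext_def verts_def)
lemma edges_ext: "edges (ext N D c G) = {(\<lambda>x. x + N*s) ` g | g s. g \<in> edges G \<and> s < 2^D} \<union>
   {{v + N*s, v + N*(s XOR 2^a)} | v s a. v \<in> verts G \<and> s < 2^D \<and> a < D \<and>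
        (\<forall>g\<in>edges G. v \<in> g \<longrightarrow> c g \<noteq> a)}"
  by (simp add: ext_def edges_def)

lemma enc_mod: "v < N \<Longrightarrow> (v + N*s) mod N = (v::nat)" by simp
lemma enc_div: "v < N \<Longrightarrow> (v + N*s) div N = (s::nat)" by simp

lemma simple_edge: "simple_graph G \<Longrightarrow> g \<in> edges G \<Longrightarrow> \<exists>u w. u \<noteq> w \<and> u \<in> verts G \<and> w \<in> verts G \<and> g = {u,w}"
  unfolding simple_graph_def by blast

locale constr =
  fixes G :: "nat graph" and N D :: nat and c :: "nat set \<Rightarrow> nat"
  assumes sg: "simple_graph G" and N: "\<forall>v\<in>verts G. v < N"
    and col: "proper_edge_colouring G D c"
begin

abbreviation "L s g \<equiv> (\<lambda>x. x + N*s) ` g"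

lemma edge_sub: "g \<in> edges G \<Longrightarrow> g \<subseteq> verts G"
  using simple_edge[OF sg] by blast

lemma proj_lift: "g \<in> edges G \<Longrightarrow> (\<lambda>x. x mod N) ` L s g = g"
proof -
  assume "g \<in> edges G"
  then have "\<forall>x\<in>g. x < N" using edge_sub N by blast
  then show ?thesis by (force simp: image_image)
qed

lemma proj_new: "v \<in> verts G \<Longrightarrow> (\<lambda>x. x mod N) ` {v + N*s, v + N*t} = {v}"
  using N by auto

lemma single_not_edge: "{v} \<notin> edges G"
  using simple_edge[OF sg] by (metis doubleton_eq_iff insert_absorb2 singleton_insert_inj_eq)

lemma ecol_lift: "g \<in> edges G \<Longrightarrow> ecol N c G (L s g) = c g"
  unfolding ecol_def using proj_lift by simp

lemma ecol_new: assumes "v \<in> verts G"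
  shows "ecol N c G {v + N*s, v + N*(s XOR 2^a)} = a"
proof -
  have vN: "v < N" using N assms by auto
  have "(THE b. \<exists>x\<in>{v + N*s, v + N*(s XOR 2^a)}. \<exists>y\<in>{v + N*s, v + N*(s XOR 2^a)}.
           (x div N) XOR (y div N) = 2^b) = a"
  proof (rule the_equality)
    show "\<exists>x\<in>{v + N*s, v + N*(s XOR 2^a)}. \<exists>y\<in>{v + N*s, v + N*(s XOR 2^a)}.
           (x div N) XOR (y div N) = 2^a"
      using vN x3 by (intro bexI[of _ "v + N*s"] bexI[of _ "v + N*(s XOR 2^a)"]) auto
  next
    fix b assume "\<exists>x\<in>{v + N*s, v + N*(s XOR 2^a)}. \<exists>y\<in>{v + N*s, v + N*(s XOR 2^a)}.
           (x div N) XOR (y div N) = 2^b"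
    then have "(2::nat)^b = 2^a \<or> (2::nat)^b = 0" using vN x3 x3' by auto
    then show "b = a" by auto
  qed
  then show ?thesis unfolding ecol_def using proj_new[OF assms] single_not_edge by simp
qed

lemma new_normal:
  assumes "v < N" "v + N*l \<in> {v + N*t, v + N*(t XOR 2^a)}"
  shows "{v + N*t, v + N*(t XOR 2^a)} = {v + N*l, v + N*(l XOR 2^a)}"
proof -
  have "l = t \<or> l = t XOR 2^a" using assms enc_div by (metis insert_iff singletonD)
  then show ?thesis using x2 by auto
qed

lemma proper: "proper_edge_colouring (ext N D c G) D (ecol N c G)"
  unfolding proper_edge_colouring_def
proof (intro conjI ballI impI)
  fix e assume "e \<in> edges (ext N D c G)"
  then show "ecol N c G e < D" unfolding edges_ext
  proof
    assume "e \<in> {L s g | g s. g \<in> edges G \<and> s < 2^D}"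
    then obtain g s where "e = L s g" "g \<in> edges G" by blast
    then show ?thesis using col ecol_lift unfolding proper_edge_colouring_def by simp
  next
    assume "e \<in> {{v + N*s, v + N*(s XOR 2^a)} | v s a. v \<in> verts G \<and> s < 2^D \<and> a < D \<and>
        (\<forall>g\<in>edges G. v \<in> g \<longrightarrow> c g \<noteq> a)}"
    then obtain v s a where "e = {v + N*s, v + N*(s XOR 2^a)}" "v \<in> verts G" "a < D" by blast
    then show ?thesis using ecol_new by simp
  qed
next
  fix e f assume e: "e \<in> edges (ext N D c G)" and f: "f \<in> edges (ext N D c G)"
    and ef: "e \<noteq> f \<and> e \<inter> f \<noteq> {}"
  then obtain z where z: "z \<in> e" "z \<in> f" by blast
  define E1 where "E1 = {L s g | g s. g \<in> edges G \<and> s < 2^D}"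
  define E2 where "E2 = {{v + N*s, v + N*(s XOR 2^a)} | v s a. v \<in> verts G \<and> s < 2^D \<and> a < D \<and>
        (\<forall>g\<in>edges G. v \<in> g \<longrightarrow> c g \<noteq> a)}"
  have EE: "edges (ext N D c G) = E1 \<union> E2" unfolding E1_def E2_def by (rule edges_ext)
  have lf: "ecol N c G e1 \<noteq> ecol N c G e2"
    if H1: "e1 \<in> E1" and H2: "e2 \<in> E2" and H3: "z \<in> e1" and H4: "z \<in> e2" for e1 e2
  proof -
    obtain g s where g: "e1 = L s g" "g \<in> edges G" using H1 unfolding E1_def by blast
    obtain v t a where v: "e2 = {v + N*t, v + N*(t XOR 2^a)}" "v \<in> verts G"
        "\<forall>g\<in>edges G. v \<in> g \<longrightarrow> c g \<noteq> a" using H2 unfolding E2_def by blast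
    obtain u where u: "u \<in> g" "z = u + N*s" using g H3 by blast
    have "z mod N = v" using H4 v N by auto
    moreover have "u < N" using u N edge_sub g by blast
    then have "z mod N = u" using u by simp
    ultimately have "v \<in> g" using u by simp
    then show ?thesis using v g ecol_lift ecol_new by auto
  qed
  show "ecol N c G e \<noteq> ecol N c G f"
  proof -
    consider "e \<in> E1" "f \<in> E1" | "e \<in> E1" "f \<in> E2" | "e \<in> E2" "f \<in> E1" | "e \<in> E2" "f \<in> E2"
      using e f unfolding EE Un_iff by blast
    then show ?thesis
    proof cases
      case 1
      obtain g1 s1 where g1: "e = L s1 g1" "g1 \<in> edges G" using 1 unfolding E1_def by blast
      obtain g2 s2 where g2: "f = L s2 g2" "g2 \<in> edges G" using 1 unfolding E1_def by blast
      obtain u1 where u1: "u1 \<in> g1" "z = u1 + N*s1" using g1 z by blast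
      obtain u2 where u2: "u2 \<in> g2" "z = u2 + N*s2" using g2 z by blast
      have "u1 < N" "u2 < N" using u1 u2 g1 g2 edge_sub N by auto
      then have "s1 = s2" "u1 = u2" using u1 u2 enc_div enc_mod by metis+
      then have "g1 \<noteq> g2" "g1 \<inter> g2 \<noteq> {}" using g1 g2 ef u1 u2 by auto
      then show ?thesis using col g1 g2 ecol_lift unfolding proper_edge_colouring_def by auto
    next
      case 2 then show ?thesis using lf z by blast
    next
      case 3 then show ?thesis using lf[of f e] z by auto
    next
      case 4
      obtain v1 t1 a1 where v1: "e = {v1 + N*t1, v1 + N*(t1 XOR 2^a1)}" "v1 \<in> verts G" using 4 unfolding E2_def by blast
      obtain v2 t2 a2 where v2: "f = {v2 + N*t2, v2 + N*(t2 XOR 2^a2)}" "v2 \<in> verts G" using 4 unfolding E2_def by blast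
      have N1: "v1 < N" "v2 < N" using v1 v2 N by auto
      have "z \<in> {v1 + N*t1, v1 + N*(t1 XOR 2^a1)}" using z v1 by simp
      then have z1: "z mod N = v1" using N1 by auto
      have "z \<in> {v2 + N*t2, v2 + N*(t2 XOR 2^a2)}" using z v2 by simp
      then have "z mod N = v2" using N1 by auto
      note z1 this
      then have vv: "v1 = v2" by simp
      define l where "l = z div N"
      have zl: "z = v1 + N*l" using `z mod N = v1` l_def by (metis mod_mult_div_eq add.commute)
      have ee: "e = {v1 + N*l, v1 + N*(l XOR 2^a1)}" using new_normal[OF N1(1)] zl z v1 by metis
      have ff: "f = {v1 + N*l, v1 + N*(l XOR 2^a2)}" using new_normal[OF N1(2)] zl z v2 vv by metis
      have "a1 \<noteq> a2" using ee ff ef by auto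
      then show ?thesis using ee ff ecol_new v1 by simp
    qed
  qed
qed

lemma degree_ext: assumes x: "x \<in> verts (ext N D c G)" shows "degree (ext N D c G) x = D"
proof -
  obtain v s where vs: "x = v + N*s" "v \<in> verts G" "s < 2^D" using x unfolding verts_ext by blast
  let ?A = "{e \<in> edges (ext N D c G). x \<in> e}"
  have "bij_betw (ecol N c G) ?A {..<D}"
    unfolding bij_betw_def
  proof (intro conjI)
    have P1: "\<forall>e\<in>edges (ext N D c G). ecol N c G e < D" and
      P2: "\<forall>e\<in>edges (ext N D c G). \<forall>f\<in>edges (ext N D c G). e \<noteq> f \<and> e \<inter> f \<noteq> {} \<longrightarrow> ecol N c G e \<noteq> ecol N c G f"
      using proper unfolding proper_edge_colouring_def by (rule conjunct1, rule conjunct2)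
    show "inj_on (ecol N c G) ?A"
    proof (rule inj_onI)
      fix e f assume e: "e \<in> ?A" and f: "f \<in> ?A" and ef: "ecol N c G e = ecol N c G f"
      show "e = f"
      proof (rule ccontr)
        assume "e \<noteq> f"
        moreover have "e \<inter> f \<noteq> {}" using e f by blast
        ultimately show False using P2 e f ef by blast
      qed
    qed
    show "ecol N c G ` ?A = {..<D}"
    proof
      show "ecol N c G ` ?A \<subseteq> {..<D}" using P1 by auto
    next
      show "{..<D} \<subseteq> ecol N c G ` ?A"
      proof
        fix a assume a: "a \<in> {..<D}"
        show "a \<in> ecol N c G ` ?A"
        proof (cases "\<exists>g\<in>edges G. v \<in> g \<and> c g = a")
          case True
          then obtain g where g: "g \<in> edges G" "v \<in> g" "c g = a" by blast
          have "L s g \<in> edges (ext N D c G)" unfolding edges_ext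
            by (rule UnI1) (use g vs in blast)
          moreover have "x \<in> L s g" using g vs by blast
          ultimately have A1: "L s g \<in> ?A" by blast
          have A2: "ecol N c G (L s g) = a" using g ecol_lift by simp
          show ?thesis by (rule rev_image_eqI[where f="ecol N c G", OF A1 A2[symmetric]])
        next
          case False
          have "{v + N*s, v + N*(s XOR 2^a)} \<in> edges (ext N D c G)" unfolding edges_ext
            by (rule UnI2) (use False vs a in blast)
          then have A1: "{v + N*s, v + N*(s XOR 2^a)} \<in> ?A" using vs by blast
          have A2: "ecol N c G {v + N*s, v + N*(s XOR 2^a)} = a" using ecol_new vs by simp
          show ?thesis by (rule rev_image_eqI[where f="ecol N c G", OF A1 A2[symmetric]])
        qed
      qed
    qed
  qed
  then have "card ?A = card {..<D}" by (rule bij_betw_same_card)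
  then show ?thesis unfolding degree_def by simp
qed

lemma in_verts: "v \<in> verts G \<Longrightarrow> s < 2^D \<Longrightarrow> v + N*s \<in> verts (ext N D c G)"
  unfolding verts_ext by blast

lemma lift_in: "g \<in> edges G \<Longrightarrow> s < 2^D \<Longrightarrow> L s g \<in> edges (ext N D c G)"
  unfolding edges_ext by (rule UnI1) blast

lemma edge_cases:
  assumes "e \<in> edges (ext N D c G)"
  obtains g s where "e = L s g" "g \<in> edges G" "s < 2^D"
  | v s a where "e = {v + N*s, v + N*(s XOR 2^a)}" "v \<in> verts G" "s < 2^D" "a < D"
proof -
  show thesis using assms unfolding edges_ext
  proof (rule UnE)
    assume "e \<in> {L s g | g s. g \<in> edges G \<and> s < 2^D}"
    then obtain g s where "e = L s g" "g \<in> edges G" "s < 2^D" by blast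
    then show thesis by (rule that(1))
  next
    assume "e \<in> {{v + N*s, v + N*(s XOR 2^a)} | v s a. v \<in> verts G \<and> s < 2^D \<and> a < D \<and>
        (\<forall>g\<in>edges G. v \<in> g \<longrightarrow> c g \<noteq> a)}"
    then obtain v s a where "e = {v + N*s, v + N*(s XOR 2^a)}" "v \<in> verts G" "s < 2^D" "a < D" by blast
    then show thesis by (rule that(2))
  qed
qed

lemma vert_cases:
  assumes "x \<in> verts (ext N D c G)"
  obtains v s where "x = v + N*s" "v \<in> verts G" "s < 2^D"
  using assms unfolding verts_ext by blast

lemma simple_ext: "simple_graph (ext N D c G)"
  unfolding simple_graph_def
proof (intro conjI ballI)
  have "verts (ext N D c G) \<subseteq> (\<lambda>(v,s). v + N*s) ` (verts G \<times> {..<2^D})"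
  proof
    fix x assume "x \<in> verts (ext N D c G)"
    then obtain v s where "x = v + N*s" "v \<in> verts G" "s < 2^D" by (rule vert_cases)
    then show "x \<in> (\<lambda>(v,s). v + N*s) ` (verts G \<times> {..<2^D})" by force
  qed
  moreover have "finite (verts G)" using sg unfolding simple_graph_def by blast
  ultimately show "finite (verts (ext N D c G))" by (meson finite_SigmaI finite_imageI finite_lessThan finite_subset)
next
  fix e assume e: "e \<in> edges (ext N D c G)"
  show "\<exists>u v. u \<noteq> v \<and> u \<in> verts (ext N D c G) \<and> v \<in> verts (ext N D c G) \<and> e = {u, v}"
    using e
  proof (cases rule: edge_cases)
    case (1 g s)
    obtain u w where uw: "u \<noteq> w" "u \<in> verts G" "w \<in> verts G" "g = {u,w}" using 1(2) simple_edge[OF sg] by blast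
    have "e = {u + N*s, w + N*s}" using 1 uw by simp
    moreover have "u + N*s \<noteq> w + N*s" using uw by simp
    moreover have "u + N*s \<in> verts (ext N D c G)" "w + N*s \<in> verts (ext N D c G)"
      using in_verts uw 1 by auto
    ultimately show ?thesis by blast
  next
    case (2 v s a)
    have "v < N" using 2 N by auto
    then have "v + N*s \<noteq> v + N*(s XOR 2^a)" using x4 by (metis enc_div)
    moreover have "v + N*s \<in> verts (ext N D c G)" "v + N*(s XOR 2^a) \<in> verts (ext N D c G)"
      using in_verts 2 x1 by auto
    ultimately show ?thesis using 2 by blast
  qed
qed

lemma subgraph_ext: "subgraph G (ext N D c G)"
  unfolding subgraph_def
proof
  show "verts G \<subseteq> verts (ext N D c G)" using in_verts[of _ 0] by auto
  show "edges G \<subseteq> edges (ext N D c G)" using lift_in[of _ 0] by auto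
qed

lemma max_degree_ext: assumes "D = max_degree G" shows "max_degree (ext N D c G) = D"
proof (cases "verts G = {}")
  case True
  then have "verts (ext N D c G) = {}" unfolding verts_ext by auto
  then show ?thesis using assms True unfolding max_degree_def by simp
next
  case False
  then have "verts (ext N D c G) \<noteq> {}" using subgraph_ext unfolding subgraph_def by blast
  then have "degree (ext N D c G) ` verts (ext N D c G) = {D}" using degree_ext by auto
  then show ?thesis unfolding max_degree_def by simp
qed

lemma class1_ext: assumes "D = max_degree G" "class1 G" shows "class1 (ext N D c G)"
proof -
  have "chromatic_index (ext N D c G) = D"
    unfolding chromatic_index_def
  proof (rule Least_equality)
    show "\<exists>c'. proper_edge_colouring (ext N D c G) D c'" using proper by blast
  next
    fix n assume "\<exists>c'. proper_edge_colouring (ext N D c G) n c'"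
    then obtain c' where "proper_edge_colouring (ext N D c G) n c'" by blast
    then have "proper_edge_colouring G n c'" using subgraph_ext
      unfolding proper_edge_colouring_def subgraph_def by blast
    then have "chromatic_index G \<le> n" unfolding chromatic_index_def by (blast intro: Least_le)
    then show "D \<le> n" using assms unfolding class1_def by simp
  qed
  then show ?thesis unfolding class1_def using max_degree_ext assms by simp
qed

lemma P1: "x \<in> verts (ext N D c G) \<Longrightarrow> x mod N \<in> verts G"
  by (erule vert_cases) (use N in auto)

lemma P2: assumes "{p,q} \<in> edges (ext N D c G)"
  shows "p mod N = q mod N \<or> {p mod N, q mod N} \<in> edges G"
  using assms
proof (cases rule: edge_cases)
  case (1 g s)
  obtain u w where uw: "u \<in> verts G" "w \<in> verts G" "g = {u,w}" using 1(2) simple_edge[OF sg] by blast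
  have uN: "u < N" and wN: "w < N" using uw N by auto
  have "{p,q} = {u + N*s, w + N*s}" using 1 uw by simp
  then have "(p = u + N*s \<and> q = w + N*s) \<or> (p = u + N*s \<and> q = w + N*s) \<or> (p = w + N*s \<and> q = u + N*s)"
    unfolding doubleton_eq_iff by blast
  then have "{p mod N, q mod N} = {u, w}"
  proof (elim disjE conjE)
    assume "p = w + N*s" "q = u + N*s"
    then show ?thesis using uN wN by (simp add: insert_commute)
  qed (use uN wN in simp_all)
  then show ?thesis using 1 uw by simp
next
  case (2 v s a)
  have vN: "v < N" using 2 N by auto
  have "{p,q} = {v + N*s, v + N*(s XOR 2^a)}" using 2 by simp
  then have "(p = v + N*s \<or> p = v + N*(s XOR 2^a)) \<and> (q = v + N*s \<or> q = v + N*(s XOR 2^a))"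
    by blast
  then have "p mod N = v" "q mod N = v" using vN by auto
  then show ?thesis by simp
qed
end



lemma exists_col:
  assumes "simple_graph G" "class1 G"
  shows "\<exists>c. proper_edge_colouring G (max_degree G) c"
proof -
  have "edges G \<subseteq> Pow (verts G)" using simple_edge[OF assms(1)] by blast
  moreover have "finite (verts G)" using assms(1) unfolding simple_graph_def by blast
  ultimately have fin: "finite (edges G)" by (meson finite_Pow_iff finite_subset)
  obtain h where h: "bij_betw h (edges G) {0..<card (edges G)}"
    using ex_bij_betw_finite_nat[OF fin] by blast
  have "proper_edge_colouring G (card (edges G)) h"
    unfolding proper_edge_colouring_def
  proof (intro conjI ballI impI)
    fix e assume "e \<in> edges G" then show "h e < card (edges G)"
      using h unfolding bij_betw_def by auto
  next
    fix e f assume "e \<in> edges G" "f \<in> edges G" "e \<noteq> f \<and> e \<inter> f \<noteq> {}"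
    then show "h e \<noteq> h f" using h unfolding bij_betw_def inj_on_def by blast
  qed
  then have "\<exists>n c. proper_edge_colouring G n c" by blast
  then have "\<exists>c. proper_edge_colouring G (chromatic_index G) c"
    unfolding chromatic_index_def by (rule LeastI_ex)
  then show ?thesis using assms(2) unfolding class1_def by simp
qed

lemma N_bound: "finite V \<Longrightarrow> \<forall>v\<in>V. v < Suc (Max (insert 0 (V::nat set)))"
  by (simp add: le_imp_less_Suc)

definition hproj :: "(nat \<Rightarrow> nat) \<Rightarrow> nat list \<Rightarrow> nat list" where
  "hproj N xs = map (\<lambda>j. xs ! j mod N j) [0..<length xs]"

lemma hproj_len[simp]: "length (hproj N xs) = length xs" by (simp add: hproj_def)
lemma hproj_nth[simp]: "j < length xs \<Longrightarrow> hproj N xs ! j = xs ! j mod N j" by (simp add: hproj_def)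

lemma edges_cart: "edges (cart_prod k G) = {{xs, ys} | xs ys. length xs = k \<and> length ys = k \<and>
        (\<forall>i<k. xs ! i \<in> verts (G i)) \<and> (\<forall>i<k. ys ! i \<in> verts (G i)) \<and>
        (\<exists>i<k. {xs ! i, ys ! i} \<in> edges (G i) \<and> (\<forall>j<k. j \<noteq> i \<longrightarrow> xs ! j = ys ! j))}"
  by (simp add: cart_prod_def edges_def)

theorem lemma2:
  fixes k :: nat and G :: "nat \<Rightarrow> nat graph"
  assumes "k \<ge> 2"
    and "\<forall>i<k. simple_graph (G i) \<and> class1 (G i)"
  shows "\<exists>Gs :: nat \<Rightarrow> nat graph.
           (\<forall>i<k. simple_graph (Gs i) \<and> subgraph (G i) (Gs i) \<and>
                  regular (Gs i) (max_degree (G i)) \<and> class1 (Gs i)) \<and>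
           (\<forall>e\<in>edges (cart_prod k G). \<forall>f\<in>edges (cart_prod k G).
              edge_dist (cart_prod k G) e f \<ge> 3 \<longrightarrow> edge_dist (cart_prod k Gs) e f \<ge> 3)"
proof -
  define Dl where "Dl i = max_degree (G i)" for i
  define N where "N i = Suc (Max (insert 0 (verts (G i))))" for i
  define c where "c i = (SOME c. proper_edge_colouring (G i) (Dl i) c)" for i
  define Gs where "Gs i = ext (N i) (Dl i) (c i) (G i)" for i
  have C: "constr (G i) (N i) (Dl i) (c i)" if "i < k" for i
  proof
    show sg: "simple_graph (G i)" using assms(2) that by blast
    show "\<forall>v\<in>verts (G i). v < N i" unfolding N_def
      using N_bound sg unfolding simple_graph_def by blast
    have "\<exists>c. proper_edge_colouring (G i) (Dl i) c"
      unfolding Dl_def using exists_col sg assms(2) that by blast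
    then show "proper_edge_colouring (G i) (Dl i) (c i)" unfolding c_def by (rule someI_ex)
  qed
  have part1: "\<forall>i<k. simple_graph (Gs i) \<and> subgraph (G i) (Gs i) \<and>
                  regular (Gs i) (max_degree (G i)) \<and> class1 (Gs i)"
  proof (intro allI impI conjI)
    fix i assume i: "i < k"
    interpret constr "G i" "N i" "Dl i" "c i" by (rule C[OF i])
    show "simple_graph (Gs i)" unfolding Gs_def by (rule simple_ext)
    show "subgraph (G i) (Gs i)" unfolding Gs_def by (rule subgraph_ext)
    show "regular (Gs i) (max_degree (G i))" unfolding Gs_def regular_def Dl_def[symmetric]
      using degree_ext by blast
    show "class1 (Gs i)" unfolding Gs_def
      by (rule class1_ext) (use assms(2) i Dl_def in auto)
  qed
  let ?h = "hproj N"
  have ordered: "?h xs = ?h ys \<or> {?h xs, ?h ys} \<in> edges (cart_prod k G)"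
    if xs: "length xs = k" "\<forall>i<k. xs ! i \<in> verts (Gs i)"
      and ys: "length ys = k" "\<forall>i<k. ys ! i \<in> verts (Gs i)"
      and i: "i < k" "{xs ! i, ys ! i} \<in> edges (Gs i)" "\<forall>j<k. j \<noteq> i \<longrightarrow> xs ! j = ys ! j"
    for xs ys i
  proof -
    interpret constr "G i" "N i" "Dl i" "c i" by (rule C[OF i(1)])
    have "xs ! i mod N i = ys ! i mod N i \<or> {xs ! i mod N i, ys ! i mod N i} \<in> edges (G i)"
      using P2 i(2) unfolding Gs_def by blast
    then show ?thesis
    proof
      assume eq: "xs ! i mod N i = ys ! i mod N i"
      have "?h xs = ?h ys"
      proof (rule nth_equalityI)
        show "length (?h xs) = length (?h ys)" using xs ys by simp
        fix j assume "j < length (?h xs)"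
        then have j: "j < k" using xs by simp
        show "?h xs ! j = ?h ys ! j"
          using eq i(3) j xs ys by (cases "j = i") auto
      qed
      then show ?thesis by blast
    next
      assume ed: "{xs ! i mod N i, ys ! i mod N i} \<in> edges (G i)"
      have vx: "\<forall>j<k. ?h xs ! j \<in> verts (G j)"
      proof (intro allI impI)
        fix j assume j: "j < k"
        interpret cj: constr "G j" "N j" "Dl j" "c j" by (rule C[OF j])
        show "?h xs ! j \<in> verts (G j)" using cj.P1 xs j unfolding Gs_def by simp
      qed
      have vy: "\<forall>j<k. ?h ys ! j \<in> verts (G j)"
      proof (intro allI impI)
        fix j assume j: "j < k"
        interpret cj: constr "G j" "N j" "Dl j" "c j" by (rule C[OF j])
        show "?h ys ! j \<in> verts (G j)" using cj.P1 ys j unfolding Gs_def by simp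
      qed
      have "{?h xs ! i, ?h ys ! i} \<in> edges (G i)" using ed xs ys i by simp
      moreover have "\<forall>j<k. j \<noteq> i \<longrightarrow> ?h xs ! j = ?h ys ! j" using i(3) xs ys by simp
      ultimately have "length (?h xs) = k \<and> length (?h ys) = k \<and>
        (\<forall>i<k. ?h xs ! i \<in> verts (G i)) \<and> (\<forall>i<k. ?h ys ! i \<in> verts (G i)) \<and>
        (\<exists>i<k. {?h xs ! i, ?h ys ! i} \<in> edges (G i) \<and> (\<forall>j<k. j \<noteq> i \<longrightarrow> ?h xs ! j = ?h ys ! j))"
        using xs ys vx vy i(1) by auto
      then have "{?h xs, ?h ys} \<in> edges (cart_prod k G)" unfolding edges_cart by blast
      then show ?thesis by blast
    qed
  qed
  have hE: "?h p = ?h q \<or> {?h p, ?h q} \<in> edges (cart_prod k G)"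
    if pq: "{p,q} \<in> edges (cart_prod k Gs)" for p q
  proof -
    obtain xs ys i where X: "{p,q} = {xs,ys}" "length xs = k" "\<forall>i<k. xs ! i \<in> verts (Gs i)"
      "length ys = k" "\<forall>i<k. ys ! i \<in> verts (Gs i)"
      "i < k" "{xs ! i, ys ! i} \<in> edges (Gs i)" "\<forall>j<k. j \<noteq> i \<longrightarrow> xs ! j = ys ! j"
      using pq unfolding edges_cart by blast
    have o: "?h xs = ?h ys \<or> {?h xs, ?h ys} \<in> edges (cart_prod k G)"
      by (rule ordered[OF X(2-8)])
    from X(1) have "(p = xs \<and> q = ys) \<or> (p = ys \<and> q = xs)" by (auto simp: doubleton_eq_iff)
    then show ?thesis using o by (auto simp: insert_commute)
  qed
  have hid: "?h xs = xs" if HE: "e \<in> edges (cart_prod k G)" and HX: "xs \<in> e" for e xs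
  proof -
    obtain as bs where X: "e = {as, bs}" "length as = k" "\<forall>i<k. as ! i \<in> verts (G i)"
      "length bs = k" "\<forall>i<k. bs ! i \<in> verts (G i)"
      using HE unfolding edges_cart by blast
    have L: "length xs = k" and V: "\<forall>i<k. xs ! i \<in> verts (G i)" using X HX by auto
    show ?thesis
    proof (rule nth_equalityI)
      show "length (?h xs) = length xs" by simp
      fix j assume "j < length (?h xs)"
      then have j: "j < k" using L by simp
      interpret cj: constr "G j" "N j" "Dl j" "c j" by (rule C[OF j])
      have "xs ! j < N j" using cj.N V j by blast
      then show "?h xs ! j = xs ! j" using j L by simp
    qed
  qed
  have part2: "\<forall>e\<in>edges (cart_prod k G). \<forall>f\<in>edges (cart_prod k G).
              edge_dist (cart_prod k G) e f \<ge> 3 \<longrightarrow> edge_dist (cart_prod k Gs) e f \<ge> 3"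
  proof (intro ballI impI)
    fix e f assume e: "e \<in> edges (cart_prod k G)" and f: "f \<in> edges (cart_prod k G)"
      and d: "edge_dist (cart_prod k G) e f \<ge> 3"
    have "edge_dist (cart_prod k G) e f \<le> edge_dist (cart_prod k Gs) e f"
      by (rule edge_dist_proj[of "cart_prod k Gs" ?h "cart_prod k G", OF hE])
         (use hid e f in blast)+
    then show "edge_dist (cart_prod k Gs) e f \<ge> 3" using d by (meson order_trans)
  qed
  show ?thesis using part1 part2 by blast
qed

end
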